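(* Let $A\in\mathbb{C}^{n\times n}$, let $1\le j\le n$, and fix vectors $\mathbf v,\mathbf c_1,\dots,\mathbf c_j\in\mathbb{C}^n$. Consider the map $\mathbf f$ of the variables $\mathbf q_1,\dots,\mathbf q_j\in\mathbb{C}^n$ and $\hat H=(h_{il})\in\mathbb{C}^{j\times j}$ (with columns $\hat{\mathbf h}_1,\dots,\hat{\mathbf h}_j$) whose components are the left-hand sides of the system $$\begin{cases} A[\mathbf q_1,\dots,\mathbf q_j]-[\mathbf q_1,\dots,\mathbf q_j][\hat{\mathbf h}_1,\dots,\hat{\mathbf h}_j]=O,\\ [\mathbf c_1,\dots,\mathbf c_i]^{\mathsf H}\mathbf q_i-(0,\dots,0,1)^\top=\mathbf 0\in\mathbb{C}^i, & i=1,\dots,j,\\ \mathbf q_1-\mathbf v=\mathbf 0,\\ h_{il}=0, & i>l+1.\end{cases}$$ Assume $(\mathbf q_1,\dots,\mathbf q_j,\hat H)$ satisfies this system and $h_{i+1,i}\neq0$ for $i=1,\dots,j-1$. Then the Jacobian of $\mathbf f$ at $(\mathbf q_1,\dots,\mathbf q_j,\hat H)$ is injective.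
   Context: The Jacobian is the complex derivative of $\mathbf f$ with respect to all entries of $\mathbf q_1,\dots,\mathbf q_j$ and all entries of $\hat H$ ($\mathbf f$ is holomorphic in these variables); injective means it has trivial kernel. $X^{\mathsf H}$ denotes conjugate transpose. *)

theory Defs
  imports "HOL-Analysis.Analysis"
begin

text \<open>The index set {1..j} is modelled by a finite well-ordered type 'j; idx i is the
  0-based position of i in that order (so position idx i + 1 in the paper).\<close>

definition idx :: "'j::{finite,wellorder} \<Rightarrow> nat" where
  "idx i = card {k. k < i}"

text \<open>Arguments: Q with Q$i = q_i, H with H$i$l = h_il (row i, column l).\<close>

definition arnoldi_map ::
  "complex^'n^'n \<Rightarrow> complex^'n^('j::{finite,wellorder}) \<Rightarrow> complex^'n \<Rightarrow>
   (complex^'n^('j::{finite,wellorder})) \<times> (complex^('j::{finite,wellorder})^('j::{finite,wellorder})) \<Rightarrow>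
   (complex^'n^('j::{finite,wellorder})) \<times> (complex^('j::{finite,wellorder})^('j::{finite,wellorder})) \<times> (complex^'n) \<times> (complex^('j::{finite,wellorder})^('j::{finite,wellorder}))" where
  "arnoldi_map A c v = (\<lambda>(Q, H).
     ((\<chi> l. A *v (Q$l) - (\<Sum>i\<in>UNIV. H$i$l *s Q$i)),
      (\<chi> i k. if idx k \<le> idx i
               then (\<Sum>m\<in>UNIV. cnj (c$k$m) * Q$i$m) - (if k = i then 1 else 0)
               else 0),
      Q $ (LEAST i. True) - v,
      (\<chi> i l. if idx i > idx l + 1 then H$i$l else 0)))"

end

theory Submission imports Defs begin

lemma bounded_linear_axis: "bounded_linear (axis i :: 'a::real_normed_vector \<Rightarrow> 'a^'n)"
proof (rule bounded_linear_intro[where K=1])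
  show "axis i (x + y) = axis i x + axis i y" for x y :: 'a by (auto simp: axis_def vec_eq_iff)
  show "axis i (r *\<^sub>R x) = r *\<^sub>R axis i x" for r and x :: 'a by (auto simp: axis_def vec_eq_iff)
  show "norm (axis i x) \<le> norm x * 1" for x :: 'a
  proof -
    have "norm (axis i x :: 'a^'n) \<le> (\<Sum>j\<in>UNIV. norm (axis i x $ j))" unfolding norm_vec_def by (rule L2_set_le_sum) simp
    also have "\<dots> = (\<Sum>j\<in>UNIV. if j = i then norm x else 0)"
      by (rule sum.cong) (auto simp: axis_def)
    also have "\<dots> = norm x" by simp
    finally show ?thesis by simp
  qed
qed

lemma hd_vec:
  fixes f :: "'a::real_normed_vector \<Rightarrow> 'b::real_normed_vector^'n"
  assumes "\<And>i. ((\<lambda>x. f x $ i) has_derivative (\<lambda>h. f' h $ i)) F"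
  shows "(f has_derivative f') F"
proof -
  have e: "\<And>y::'b^'n. y = (\<Sum>i\<in>UNIV. axis i (y $ i))"
    by (simp add: vec_eq_iff axis_def)
  have "((\<lambda>x. \<Sum>i\<in>UNIV. axis i (f x $ i)) has_derivative (\<lambda>h. \<Sum>i\<in>UNIV. axis i (f' h $ i))) F"
    by (intro has_derivative_sum bounded_linear.has_derivative[OF bounded_linear_axis] assms)
  then show ?thesis by (subst (asm) e[symmetric], subst (asm) e[symmetric])
qed

lemma hd_Q: "((\<lambda>p. fst p $ l $ m) has_derivative (\<lambda>h. fst h $ l $ m)) F"
  by (intro bounded_linear.has_derivative[OF bounded_linear_vec_nth] has_derivative_fst has_derivative_ident)
lemma hd_H: "((\<lambda>p. snd p $ l $ m) has_derivative (\<lambda>h. snd h $ l $ m)) F"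
  by (intro bounded_linear.has_derivative[OF bounded_linear_vec_nth] has_derivative_snd has_derivative_ident)
lemma hd_Q1: "((\<lambda>p. fst p $ l) has_derivative (\<lambda>h. fst h $ l)) F"
  by (intro bounded_linear.has_derivative[OF bounded_linear_vec_nth] has_derivative_fst has_derivative_ident)

lemma arnoldi_deriv:
  fixes A :: "complex^'n^'n"
    and c :: "complex^'n^('j::{finite,wellorder})"
    and v :: "complex^'n"
    and Q :: "complex^'n^('j::{finite,wellorder})"
    and H :: "complex^('j::{finite,wellorder})^('j::{finite,wellorder})"
  shows "(arnoldi_map A c v has_derivative (\<lambda>h. ((\<chi> l. A *v (fst h $ l) - (\<Sum>i\<in>UNIV. snd h$i$l *s Q$i + H$i$l *s fst h$i)),
     (\<chi> i k. if idx k \<le> idx i then (\<Sum>m\<in>UNIV. cnj (c$k$m) * fst h$i$m) else 0),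
     fst h $ (LEAST i. True),
     (\<chi> i l. if idx i > idx l + 1 then snd h$i$l else 0)))) (at (Q,H))"
  unfolding arnoldi_map_def split_beta'
proof (intro has_derivative_Pair)
  show "((\<lambda>x. \<chi> l. A *v fst x $ l - (\<Sum>i\<in>UNIV. snd x $ i $ l *s fst x $ i)) has_derivative
     (\<lambda>h. \<chi> l. A *v fst h $ l - (\<Sum>i\<in>UNIV. snd h $ i $ l *s Q $ i + H $ i $ l *s fst h $ i))) (at (Q, H))"
    apply (rule hd_vec, rule hd_vec)
    apply (simp add: matrix_vector_mult_def)
    apply (rule derivative_eq_intros hd_Q hd_H | simp)+
    apply (simp add: add.commute)
    done
  show "((\<lambda>x. \<chi> i k. if idx k \<le> idx i then (\<Sum>m\<in>UNIV. cnj (c $ k $ m) * fst x $ i $ m) - (if k = i then 1 else 0) else 0) has_derivative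
     (\<lambda>h. \<chi> i k. if idx k \<le> idx i then \<Sum>m\<in>UNIV. cnj (c $ k $ m) * fst h $ i $ m else 0)) (at (Q, H))"
    apply (rule hd_vec, rule hd_vec)
    apply (simp only: vec_lambda_beta)
    subgoal for i k
      by (cases "idx k \<le> idx i") (auto intro!: derivative_eq_intros hd_Q)
    done
  show "((\<lambda>x. fst x $ (LEAST i. True) - v) has_derivative (\<lambda>h. fst h $ (LEAST i. True))) (at (Q, H))"
    apply (rule derivative_eq_intros hd_Q1 | simp)+
    done
  show "((\<lambda>x. \<chi> i l. if idx l + 1 < idx i then snd x $ i $ l else 0) has_derivative
     (\<lambda>h. \<chi> i l. if idx l + 1 < idx i then snd h $ i $ l else 0)) (at (Q, H))"
    apply (rule hd_vec, rule hd_vec)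
    apply (simp only: vec_lambda_beta)
    subgoal for i l
      by (cases "idx l + 1 < idx i") (auto intro!: derivative_eq_intros hd_H)
    done
qed

lemma idx_less: "(i::'j::{finite,wellorder}) < k \<Longrightarrow> idx i < idx k"
  unfolding idx_def by (rule psubset_card_mono) auto

lemma idx_le_iff: "idx (i::'j::{finite,wellorder}) \<le> idx k \<longleftrightarrow> i \<le> k"
  by (metis idx_less leD le_less linorder_le_less_linear)

lemma idx_eq_iff: "idx (i::'j::{finite,wellorder}) = idx k \<longleftrightarrow> i = k"
  by (metis idx_le_iff order_antisym order_refl)

lemma ip_sum:
  fixes c :: "complex^'n^'k" and y :: "'i::finite \<Rightarrow> complex^'n"
  shows "(\<Sum>m\<in>UNIV. cnj (c$k$m) * (\<Sum>i\<in>UNIV. a i *s y i) $ m) = (\<Sum>i\<in>UNIV. a i * (\<Sum>m\<in>UNIV. cnj (c$k$m) * y i $ m))"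
proof -
  have "(\<Sum>m\<in>UNIV. cnj (c$k$m) * (\<Sum>i\<in>UNIV. a i *s y i) $ m) = (\<Sum>m\<in>UNIV. \<Sum>i\<in>UNIV. a i * (cnj (c$k$m) * y i $ m))"
    by (simp add: sum_component sum_distrib_left mult.left_commute)
  also have "\<dots> = (\<Sum>i\<in>UNIV. \<Sum>m\<in>UNIV. a i * (cnj (c$k$m) * y i $ m))"
    by (rule sum.swap)
  also have "\<dots> = (\<Sum>i\<in>UNIV. a i * (\<Sum>m\<in>UNIV. cnj (c$k$m) * y i $ m))"
    by (simp add: sum_distrib_left)
  finally show ?thesis .
qed

lemma key:
  fixes x :: "'j::{finite,wellorder} \<Rightarrow> complex" and c Q :: "complex^'n^('j::{finite,wellorder})"
  assumes B: "\<And>i k. idx k \<le> idx i \<Longrightarrow> (\<Sum>m\<in>UNIV. cnj (c$k$m) * Q$i$m) = (if k = i then 1 else 0)"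
    and z: "\<And>i. idx i > N \<Longrightarrow> x i = 0"
    and s: "\<And>k. idx k \<le> N \<Longrightarrow> (\<Sum>i\<in>UNIV. x i * (\<Sum>m\<in>UNIV. cnj (c$k$m) * Q$i$m)) = 0"
  shows "x k = 0"
proof (induction k rule: less_induct)
  case (less k)
  show ?case
  proof (cases "idx k \<le> N")
    case False thus ?thesis using z by simp
  next
    case True
    have "(\<Sum>i\<in>UNIV. x i * (\<Sum>m\<in>UNIV. cnj (c$k$m) * Q$i$m)) = (\<Sum>i\<in>UNIV. if i = k then x k else 0)"
    proof (rule sum.cong[OF refl])
      fix i
      show "x i * (\<Sum>m\<in>UNIV. cnj (c$k$m) * Q$i$m) = (if i = k then x k else 0)"
      proof (cases i k rule: linorder_cases)
        case less
        then show ?thesis using less.IH by simp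
      next
        case equal
        then show ?thesis using B[of k k] by simp
      next
        case greater
        then have "idx k \<le> idx i" using idx_le_iff less_imp_le by blast
        then show ?thesis using B[of k i] greater by simp
      qed
    qed
    then show ?thesis using s[OF True] by simp
  qed
qed

theorem proposition2:
  fixes A :: "complex^'n^'n"
    and c :: "complex^'n^('j::{finite,wellorder})"
    and v :: "complex^'n"
    and Q :: "complex^'n^('j::{finite,wellorder})"
    and H :: "complex^('j::{finite,wellorder})^('j::{finite,wellorder})"
  assumes "CARD('j) \<le> CARD('n)"
    and "arnoldi_map A c v (Q, H) = 0"
    and "\<forall>i l. idx i = idx l + 1 \<longrightarrow> H$i$l \<noteq> 0"
  shows "\<exists>f'. (arnoldi_map A c v has_derivative f') (at (Q, H)) \<and> inj f'"
proof -
  define f' where "f' = (\<lambda>h. ((\<chi> l. A *v (fst h $ l) - (\<Sum>i\<in>UNIV. snd h$i$l *s Q$i + H$i$l *s fst h$i)),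
     (\<chi> i k. if idx k \<le> idx i then (\<Sum>m\<in>UNIV. cnj (c$k$m) * fst h$i$m) else 0),
     fst h $ (LEAST i. True),
     (\<chi> i l. if idx i > idx l + 1 then snd h$i$l else 0)))"
  have D: "(arnoldi_map A c v has_derivative f') (at (Q,H))"
    unfolding f'_def by (rule arnoldi_deriv)
  have lin: "linear f'" using D has_derivative_linear bounded_linear.linear by blast
  have E: "(\<chi> l. A *v Q$l - (\<Sum>i\<in>UNIV. H$i$l *s Q$i)) = 0 \<and>
      (\<chi> i k. if idx k \<le> idx i
               then (\<Sum>m\<in>UNIV. cnj (c$k$m) * Q$i$m) - (if k = i then 1 else 0)
               else 0) = 0 \<and> Q $ (LEAST i. True) - v = 0 \<and>
      (\<chi> i l. if idx i > idx l + 1 then H$i$l else 0) = 0"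
    using assms(2) by (simp add: arnoldi_map_def zero_prod_def)
  have B: "\<And>i k. idx k \<le> idx i \<Longrightarrow> (\<Sum>m\<in>UNIV. cnj (c$k$m) * Q$i$m) = (if k = i then 1 else 0)"
  proof -
    fix i k :: 'j assume "idx k \<le> idx i"
    with E have "(\<chi> i k. if idx k \<le> idx i
               then (\<Sum>m\<in>UNIV. cnj (c$k$m) * Q$i$m) - (if k = i then 1 else 0)
               else 0) $ i $ k = 0" by simp
    with \<open>idx k \<le> idx i\<close> show "(\<Sum>m\<in>UNIV. cnj (c$k$m) * Q$i$m) = (if k = i then 1 else 0)"
      by simp
  qed
  have DH: "\<And>i l. idx i > idx l + 1 \<Longrightarrow> H$i$l = 0"
  proof -
    fix i l :: 'j assume "idx i > idx l + 1"
    with E have "(\<chi> i l. if idx i > idx l + 1 then H$i$l else 0) $ i $ l = 0" by simp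
    with \<open>idx i > idx l + 1\<close> show "H$i$l = 0" by simp
  qed
  have "inj f'" unfolding linear_injective_0[OF lin]
  proof (intro allI impI)
    fix h assume h0: "f' h = 0"
    obtain dQ dH where h: "h = (dQ, dH)" by (cases h)
    have E': "(\<chi> l. A *v (dQ $ l) - (\<Sum>i\<in>UNIV. dH$i$l *s Q$i + H$i$l *s dQ$i)) = 0 \<and>
     (\<chi> i k. if idx k \<le> idx i then (\<Sum>m\<in>UNIV. cnj (c$k$m) * dQ$i$m) else 0) = 0 \<and>
     dQ $ (LEAST i. True) = 0 \<and>
     (\<chi> i l. if idx i > idx l + 1 then dH$i$l else 0) = 0"
      using h0 unfolding f'_def h fst_conv snd_conv by (simp add: zero_prod_def)
    have a: "\<And>l. A *v (dQ $ l) - (\<Sum>i\<in>UNIV. dH$i$l *s Q$i + H$i$l *s dQ$i) = 0"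
    proof -
      fix l :: 'j
      from E' have "(\<chi> l. A *v (dQ $ l) - (\<Sum>i\<in>UNIV. dH$i$l *s Q$i + H$i$l *s dQ$i)) $ l = 0" by simp
      then show "A *v (dQ $ l) - (\<Sum>i\<in>UNIV. dH$i$l *s Q$i + H$i$l *s dQ$i) = 0" by simp
    qed
    have b: "\<And>i k. idx k \<le> idx i \<Longrightarrow> (\<Sum>m\<in>UNIV. cnj (c$k$m) * dQ$i$m) = 0"
    proof -
      fix i k :: 'j assume "idx k \<le> idx i"
      from E' have "(\<chi> i k. if idx k \<le> idx i then (\<Sum>m\<in>UNIV. cnj (c$k$m) * dQ$i$m) else 0) $ i $ k = 0" by simp
      with \<open>idx k \<le> idx i\<close> show "(\<Sum>m\<in>UNIV. cnj (c$k$m) * dQ$i$m) = 0" by simp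
    qed
    have c0: "dQ $ (LEAST i. True) = 0" using E' by simp
    have d: "\<And>i l. idx i > idx l + 1 \<Longrightarrow> dH$i$l = 0"
    proof -
      fix i l :: 'j assume "idx i > idx l + 1"
      with E' have "(\<chi> i l. if idx i > idx l + 1 then dH$i$l else 0) $ i $ l = 0" by simp
      with \<open>idx i > idx l + 1\<close> show "dH$i$l = 0" by simp
    qed
    have S: "(\<forall>i. dH$i$l = 0) \<and> (\<forall>i. idx i = idx l + 1 \<longrightarrow> dQ$i = 0)"
      if Z: "\<forall>i. idx i \<le> idx l \<longrightarrow> dQ$i = 0" for l
    proof -
      have "dQ$l = 0" using Z by simp
      hence Av: "A *v dQ$l = 0" by simp
      have eq: "(\<Sum>i\<in>UNIV. dH$i$l *s Q$i) + (\<Sum>i\<in>UNIV. H$i$l *s dQ$i) = 0"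
        using a[of l] by (simp only: Av sum.distrib diff_0 neg_equal_0_iff_equal)
      have Hz: "(\<Sum>i\<in>UNIV. H$i$l * (\<Sum>m\<in>UNIV. cnj (c$k$m) * dQ$i$m)) = 0"
        if "idx k \<le> idx l + 1" for k
      proof (rule sum.neutral, intro ballI)
        fix i
        show "H$i$l * (\<Sum>m\<in>UNIV. cnj (c$k$m) * dQ$i$m) = 0"
        proof (cases "idx i \<le> idx l")
          case True then show ?thesis using Z by simp
        next
          case False then have "idx k \<le> idx i" using that by simp
          then show ?thesis using b by simp
        qed
      qed
      have cz: "(\<Sum>i\<in>UNIV. dH$i$l * (\<Sum>m\<in>UNIV. cnj (c$k$m) * Q$i$m)) = 0"
        if "idx k \<le> idx l + 1" for k
      proof -
        have "(\<Sum>m\<in>UNIV. cnj (c$k$m) * ((\<Sum>i\<in>UNIV. dH$i$l *s Q$i) + (\<Sum>i\<in>UNIV. H$i$l *s dQ$i)) $ m) = 0"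
          using eq by simp
        then have "(\<Sum>m\<in>UNIV. cnj (c$k$m) * (\<Sum>i\<in>UNIV. dH$i$l *s Q$i) $ m)
            + (\<Sum>m\<in>UNIV. cnj (c$k$m) * (\<Sum>i\<in>UNIV. H$i$l *s dQ$i) $ m) = 0"
          by (simp only: vector_add_component distrib_left sum.distrib)
        then show ?thesis unfolding ip_sum using Hz[OF that] by simp
      qed
      have col: "\<forall>i::'j. dH$i$l = 0"
      proof
        fix i show "dH$i$l = 0"
          apply (rule key[of c Q "idx l + 1" "\<lambda>i. dH$i$l"])
            apply (erule B)
           apply (erule d)
          apply (erule cz)
          done
      qed
      have eq2: "(\<Sum>i\<in>UNIV. H$i$l *s dQ$i) = 0" using eq col by simp
      have "\<forall>i0. idx i0 = idx l + 1 \<longrightarrow> dQ$i0 = 0"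
      proof (intro allI impI)
        fix i0 :: 'j assume i0: "idx i0 = idx l + 1"
        have "(\<Sum>i\<in>UNIV. H$i$l *s dQ$i) = (\<Sum>i\<in>UNIV. if i = i0 then H$i0$l *s dQ$i0 else 0)"
        proof (rule sum.cong[OF refl])
          fix i show "H$i$l *s dQ$i = (if i = i0 then H$i0$l *s dQ$i0 else 0)"
          proof (cases "i = i0")
            case False
            then have "idx i \<noteq> idx i0" using idx_eq_iff by blast
            then show ?thesis
            proof (cases "idx i \<le> idx l")
              case True then show ?thesis using Z False by simp
            next
              case F2: False
              then have "idx i > idx l + 1" using \<open>idx i \<noteq> idx i0\<close> i0 by simp
              then show ?thesis using DH False by simp
            qed
          qed simp
        qed
        then have "H$i0$l *s dQ$i0 = 0" using eq2 by simp
        moreover have "H$i0$l \<noteq> 0" using assms(3) i0 by blast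
        ultimately show "dQ$i0 = 0" by (simp add: vec_eq_iff)
      qed
      with col show ?thesis by blast
    qed
    have Qz: "dQ$l = 0" for l
    proof (induction l rule: less_induct)
      case (less l)
      show ?case
      proof (cases "l = (LEAST i. True)")
        case True with c0 show ?thesis by simp
      next
        case False
        have "(LEAST i::'j. True) \<le> l" by (rule Least_le) simp
        with False have Ll: "(LEAST i::'j. True) < l" by simp
        define m where "m = Max {k. k < l}"
        have ne: "{k. k < l} \<noteq> {}" using Ll by auto
        have fin: "finite {k. k < l}" by simp
        have mlt: "m < l" using Max_in[OF fin ne] m_def by auto
        have mge: "\<And>k. k < l \<Longrightarrow> k \<le> m" using Max_ge[OF fin] m_def by auto
        have set: "{k. k < l} = insert m {k. k < m}" using mlt mge by (auto simp: order.order_iff_strict intro: less_trans)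
        have "idx l = idx m + 1" unfolding idx_def set by simp
        moreover have "\<forall>i. idx i \<le> idx m \<longrightarrow> dQ$i = 0"
        proof (intro allI impI)
          fix i :: 'j assume "idx i \<le> idx m"
          then have "i < l" using idx_le_iff mlt by (metis le_less_trans)
          then show "dQ$i = 0" by (rule less.IH)
        qed
        ultimately show ?thesis using S[of m] by simp
      qed
    qed
    have Hz: "dH$i$l = 0" for i l using S[of l] Qz by simp
    show "h = 0" using Qz Hz by (simp add: h zero_prod_def vec_eq_iff)
  qed
  with D show ?thesis by blast
qed

end
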